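(* Let $(A,\circ)$ be a right normal band and $F$ a proper filter of $A$. Then $\epsilon_F$ is a congruence on $(A,\circ)$, and both $F$ and its complement $A\setminus F$ are unions of $\epsilon_F$-classes.
   Context: A right normal band is a semigroup $(A,\circ)$ with $x\circ x=x$ and $(x\circ y)\circ z=(y\circ x)\circ z$. Define $f\lesssim g$ iff $g\circ f=f$. A filter is a non-empty $F\subseteq A$ with $a\circ b\in F$ for all $a,b\in F$ and such that $a\in F$, $a\lesssim b$ imply $b\in F$; it is proper if $F\ne A$. For a filter $F$, $\epsilon_F=\{(a,b)\in A\times A: e\circ a=e\circ b$ for some $e\in F\}$. *)

theory Defs
  imports Main
begin

definition right_normal_band :: "'a set \<Rightarrow> ('a \<Rightarrow> 'a \<Rightarrow> 'a) \<Rightarrow> bool" where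
  "right_normal_band A op \<longleftrightarrow>
     (\<forall>x\<in>A. \<forall>y\<in>A. op x y \<in> A) \<and>
     (\<forall>x\<in>A. \<forall>y\<in>A. \<forall>z\<in>A. op (op x y) z = op x (op y z)) \<and>
     (\<forall>x\<in>A. op x x = x) \<and>
     (\<forall>x\<in>A. \<forall>y\<in>A. \<forall>z\<in>A. op (op x y) z = op (op y x) z)"

definition rnb_le :: "('a \<Rightarrow> 'a \<Rightarrow> 'a) \<Rightarrow> 'a \<Rightarrow> 'a \<Rightarrow> bool" where
  "rnb_le op f g \<longleftrightarrow> op g f = f"

definition is_filter :: "'a set \<Rightarrow> ('a \<Rightarrow> 'a \<Rightarrow> 'a) \<Rightarrow> 'a set \<Rightarrow> bool" where
  "is_filter A op F \<longleftrightarrow> F \<subseteq> A \<and> F \<noteq> {} \<and>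
     (\<forall>a\<in>F. \<forall>b\<in>F. op a b \<in> F) \<and>
     (\<forall>a\<in>F. \<forall>b\<in>A. rnb_le op a b \<longrightarrow> b \<in> F)"

definition proper_filter :: "'a set \<Rightarrow> ('a \<Rightarrow> 'a \<Rightarrow> 'a) \<Rightarrow> 'a set \<Rightarrow> bool" where
  "proper_filter A op F \<longleftrightarrow> is_filter A op F \<and> F \<noteq> A"

definition eps_rel :: "'a set \<Rightarrow> ('a \<Rightarrow> 'a \<Rightarrow> 'a) \<Rightarrow> 'a set \<Rightarrow> ('a \<times> 'a) set" where
  "eps_rel A op F = {(a, b). a \<in> A \<and> b \<in> A \<and> (\<exists>e\<in>F. op e a = op e b)}"

definition congruence_on :: "'a set \<Rightarrow> ('a \<Rightarrow> 'a \<Rightarrow> 'a) \<Rightarrow> ('a \<times> 'a) set \<Rightarrow> bool" where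
  "congruence_on A op R \<longleftrightarrow> equiv A R \<and>
     (\<forall>a\<in>A. \<forall>b\<in>A. \<forall>c\<in>A. \<forall>d\<in>A. (a, b) \<in> R \<longrightarrow> (c, d) \<in> R \<longrightarrow> (op a c, op b d) \<in> R)"

definition union_of_classes :: "'a set \<Rightarrow> ('a \<times> 'a) set \<Rightarrow> 'a set \<Rightarrow> bool" where
  "union_of_classes A R S \<longleftrightarrow> (\<exists>C \<subseteq> {R `` {x} | x. x \<in> A}. S = \<Union>C)"

end

theory Submission
  imports Defs
begin

theorem proposition3p4:
  fixes A :: "'a set" and op :: "'a \<Rightarrow> 'a \<Rightarrow> 'a" and F :: "'a set"
  assumes "right_normal_band A op"
    and "proper_filter A op F"
  shows "congruence_on A op (eps_rel A op F)
    \<and> union_of_classes A (eps_rel A op F) F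
    \<and> union_of_classes A (eps_rel A op F) (A - F)"
proof -
  have cl: "\<And>x y. x \<in> A \<Longrightarrow> y \<in> A \<Longrightarrow> op x y \<in> A"
   and as: "\<And>x y z. x \<in> A \<Longrightarrow> y \<in> A \<Longrightarrow> z \<in> A \<Longrightarrow> op (op x y) z = op x (op y z)"
   and id: "\<And>x. x \<in> A \<Longrightarrow> op x x = x"
   and rn: "\<And>x y z. x \<in> A \<Longrightarrow> y \<in> A \<Longrightarrow> z \<in> A \<Longrightarrow> op (op x y) z = op (op y x) z"
    using assms(1) unfolding right_normal_band_def by blast+
  have FA: "F \<subseteq> A" and Fne: "F \<noteq> {}" and Fcl: "\<And>a b. a \<in> F \<Longrightarrow> b \<in> F \<Longrightarrow> op a b \<in> F"
   and Fup: "\<And>a b. a \<in> F \<Longrightarrow> b \<in> A \<Longrightarrow> op b a = a \<Longrightarrow> b \<in> F"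
    using assms(2) unfolding proper_filter_def is_filter_def rnb_le_def by blast+
  define R where "R = eps_rel A op F"
  have R: "(a,b) \<in> R \<longleftrightarrow> a \<in> A \<and> b \<in> A \<and> (\<exists>e\<in>F. op e a = op e b)" for a b
    unfolding R_def eps_rel_def by auto
  have refl: "refl_on A R"
    unfolding refl_on_def using R Fne R_def eps_rel_def by auto
  have sym: "sym R" unfolding sym_def using R by metis
  have trans: "trans R"
  proof (rule transI)
    fix a b c assume ab: "(a,b) \<in> R" and bc: "(b,c) \<in> R"
    then obtain e f where e: "e \<in> F" "op e a = op e b" and f: "f \<in> F" "op f b = op f c"
      and abc: "a \<in> A" "b \<in> A" "c \<in> A" using R by blast
    have eA: "e \<in> A" "f \<in> A" using e f FA by auto
    have "op (op f e) a = op f (op e a)" using as eA abc by auto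
    also have "\<dots> = op (op f e) b" using as eA abc e by auto
    also have "\<dots> = op (op e f) b" using rn eA abc by auto
    also have "\<dots> = op (op e f) c" using as eA abc f by auto
    also have "\<dots> = op (op f e) c" using rn eA abc by auto
    finally show "(a,c) \<in> R" using R abc Fcl e f by blast
  qed
  have RA: "R \<subseteq> A \<times> A" unfolding R_def eps_rel_def by blast
  have eqv: "equiv A R" using refl sym trans RA by (simp add: equiv_def)
  have comp: "(op a c, op b d) \<in> R" if H: "(a,b) \<in> R" "(c,d) \<in> R" for a b c d
  proof -
    obtain e f where e: "e \<in> F" "op e a = op e b" and f: "f \<in> F" "op f c = op f d"
      and abc: "a \<in> A" "b \<in> A" "c \<in> A" "d \<in> A" using H[unfolded R] by blast
    have eA: "e \<in> A" "f \<in> A" using e f FA by auto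
    have sw: "op x (op y z) = op y (op x z)" if "x \<in> A" "y \<in> A" "z \<in> A" for x y z
      using rn[OF that] as[of x y z] as[of y x z] that by simp
    have sw2: "op w (op x (op y z)) = op w (op y (op x z))" if "w \<in> A" "x \<in> A" "y \<in> A" "z \<in> A" for w x y z
      using sw[of x y z] that by simp
    have "op (op e f) (op a c) = op f (op e (op a c))" using rn[of e f "op a c"] as[of f e "op a c"] eA abc cl by simp
    also have "\<dots> = op f (op (op e a) c)" using as[of e a c] eA abc by simp
    also have "\<dots> = op f (op (op e b) c)" using e by simp
    also have "\<dots> = op e (op f (op b c))" using as[of e b c] sw[of f e "op b c"] eA abc cl by simp
    also have "\<dots> = op e (op b (op f c))" using sw2[of e f b c] eA abc by simp
    also have "\<dots> = op e (op b (op f d))" using f by simp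
    also have "\<dots> = op e (op f (op b d))" using sw2[of e b f d] eA abc by simp
    also have "\<dots> = op (op e f) (op b d)" using as[of e f "op b d"] eA abc cl by simp
    finally have "op (op e f) (op a c) = op (op e f) (op b d)" .
    then show ?thesis unfolding R using abc cl Fcl[OF e(1) f(1)] by blast
  qed
  have cong: "congruence_on A op R" unfolding congruence_on_def using eqv comp by blast
  have stay: "y \<in> F" if H: "x \<in> F" "(x,y) \<in> R" for x y
  proof -
    obtain e where e: "e \<in> F" "op e x = op e y" and xy: "x \<in> A" "y \<in> A" using H(2)[unfolded R] by blast
    have eA: "e \<in> A" using e FA by auto
    have "op e y \<in> F" using Fcl e H(1) by metis
    moreover have "op y (op e y) = op e y" using as[of y e y] rn[of y e y] as[of e y y] id[of y] eA xy by simp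
    ultimately show ?thesis using Fup xy by blast
  qed
  have cls: "S = \<Union>{R `` {x} | x. x \<in> S}" if "S \<subseteq> A" "\<And>x y. x \<in> S \<Longrightarrow> (x,y) \<in> R \<Longrightarrow> y \<in> S" for S
  proof
    show "S \<subseteq> \<Union>{R `` {x} | x. x \<in> S}" using refl that(1) unfolding refl_on_def by blast
    show "\<Union>{R `` {x} | x. x \<in> S} \<subseteq> S" using that(2) by blast
  qed
  have u1: "union_of_classes A R F" unfolding union_of_classes_def
  proof (rule exI[of _ "{R `` {x} | x. x \<in> F}"], rule conjI)
    show "{R `` {x} | x. x \<in> F} \<subseteq> {R `` {x} | x. x \<in> A}" using FA by blast
    show "F = \<Union>{R `` {x} | x. x \<in> F}" by (rule cls[OF FA stay])
  qed
  have stay2: "y \<in> A - F" if "x \<in> A - F" "(x,y) \<in> R" for x y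
    using that stay sym RA unfolding sym_def by blast
  have u2: "union_of_classes A R (A - F)" unfolding union_of_classes_def
  proof (rule exI[of _ "{R `` {x} | x. x \<in> A - F}"], rule conjI)
    show "{R `` {x} | x. x \<in> A - F} \<subseteq> {R `` {x} | x. x \<in> A}" by blast
    show "A - F = \<Union>{R `` {x} | x. x \<in> A - F}" by (rule cls[OF _ stay2]) blast
  qed
  show ?thesis using cong u1 u2 unfolding R_def by (intro conjI)
qed

end
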